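(* Let $v=\{v_n\}_{n\ge0}$ be a nondecreasing sequence of positive numbers and let $\theta$ be an inner function. Then for all $f,g\in H^2$, $$\|T_{\overline\theta}f\|_{v,0}\le\|f\|_{v,0}\qquad\text{and}\qquad\|g\|_{v,0}\le\|g\theta\|_{v,0}$$ (with values in $[0,\infty]$).
   Context: $H^2$ is the Hardy space on the unit disk, identified with boundary functions on $\mathbb T$; $\widehat f(n)$ denotes the $n$th Taylor/Fourier coefficient. Inner function: $\theta\in H^\infty$ with $|\theta|=1$ a.e. on $\mathbb T$. $T_{\overline\theta}f=P_+(\overline\theta f)$ where $P_+F=\sum_{n\ge0}\widehat F(n)z^n$. For a holomorphic $f=\sum_{n\ge0}\widehat f(n)z^n$, $\|f\|_{v,0}:=\big(\sum_{n\ge0}v_n|\widehat f(n)|^2\big)^{1/2}$. *)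

theory Defs
  imports "HOL-Analysis.Analysis"
begin

text \<open>Functions on the circle T are represented by their values on [0, 2 pi],
  parametrised by t with z = e^(i t); the measure is Lebesgue measure on [0, 2 pi].\<close>

definition circ :: "real measure" where
  "circ = lebesgue_on {0..2*pi}"

definition fourier_coeff :: "(real \<Rightarrow> complex) \<Rightarrow> int \<Rightarrow> complex" where
  "fourier_coeff f n = (integral\<^sup>L circ (\<lambda>t. f t * cis (- (of_int n * t)))) / complex_of_real (2*pi)"

definition L2_circ :: "(real \<Rightarrow> complex) set" where
  "L2_circ = {f. f \<in> borel_measurable circ \<and> integrable circ (\<lambda>t. (cmod (f t))\<^sup>2)}"

text \<open>Hardy space H^2, identified with boundary functions.\<close>
definition H2 :: "(real \<Rightarrow> complex) set" where
  "H2 = {f \<in> L2_circ. \<forall>n::int. n < 0 \<longrightarrow> fourier_coeff f n = 0}"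

definition Hinf :: "(real \<Rightarrow> complex) set" where
  "Hinf = {f. f \<in> borel_measurable circ \<and> (\<exists>C. AE t in circ. cmod (f t) \<le> C)
              \<and> (\<forall>n::int. n < 0 \<longrightarrow> fourier_coeff f n = 0)}"

definition inner_fun :: "(real \<Rightarrow> complex) \<Rightarrow> bool" where
  "inner_fun \<theta> \<longleftrightarrow> \<theta> \<in> Hinf \<and> (AE t in circ. cmod (\<theta> t) = 1)"

text \<open>Taylor coefficients of (the analytic part of) a function: hat f(n), n \<ge> 0.
  P_+ F = sum_{n\<ge>0} hat F(n) z^n is thus represented by its Taylor coefficients.\<close>
definition Pplus_coeffs :: "(real \<Rightarrow> complex) \<Rightarrow> nat \<Rightarrow> complex" where
  "Pplus_coeffs F n = fourier_coeff F (int n)"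

definition toeplitz_conj_coeffs :: "(real \<Rightarrow> complex) \<Rightarrow> (real \<Rightarrow> complex) \<Rightarrow> nat \<Rightarrow> complex" where
  "toeplitz_conj_coeffs \<theta> f = Pplus_coeffs (\<lambda>t. cnj (\<theta> t) * f t)"

definition ennsqrt :: "ennreal \<Rightarrow> ennreal" where
  "ennsqrt x = (if x = top then top else ennreal (sqrt (enn2real x)))"

definition vnorm :: "(nat \<Rightarrow> real) \<Rightarrow> (nat \<Rightarrow> complex) \<Rightarrow> ennreal" where
  "vnorm v a = ennsqrt (\<Sum>n. ennreal (v n * (cmod (a n))\<^sup>2))"

end

theory Submission
  imports Defs
begin

lemma space_circ[simp]: "space circ = {0..2*pi}"
  by (simp add: circ_def)

lemma finite_circ: "finite_measure circ"
  unfolding circ_def by (rule finite_measure_lebesgue_on) auto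

interpretation circ: finite_measure circ by (rule finite_circ)

lemma cont_meas_circ:
  assumes "continuous_on {0..2*pi} g"
  shows "g \<in> borel_measurable circ"
  unfolding circ_def by (rule continuous_imp_measurable_on_sets_lebesgue[OF assms]) auto

lemma aux_le1: "(x::real) \<le> 1 + x\<^sup>2"
proof -
  have "0 \<le> (x - 1/2)\<^sup>2" by simp
  also have "(x - 1/2)\<^sup>2 = x\<^sup>2 - x + 1/4" by (simp add: power2_eq_square field_simps)
  finally show ?thesis by linarith
qed

lemma aux_prod: "(a::real) * b \<le> a\<^sup>2 + b\<^sup>2" if "0 \<le> a" "0 \<le> b"
proof -
  have "0 \<le> (a - b)\<^sup>2" by simp
  also have "(a - b)\<^sup>2 = a\<^sup>2 - 2*(a*b) + b\<^sup>2" by (simp add: power2_diff)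
  finally have "2*(a*b) \<le> a\<^sup>2 + b\<^sup>2" by linarith
  moreover have "0 \<le> a * b" using that by simp
  ultimately show ?thesis by linarith
qed

lemma aux_sum2: "((a::real) + b)\<^sup>2 \<le> 2 * a\<^sup>2 + 2 * b\<^sup>2"
proof -
  have "0 \<le> (a - b)\<^sup>2" by simp
  also have "(a - b)\<^sup>2 = a\<^sup>2 - 2*(a*b) + b\<^sup>2" by (simp add: power2_diff)
  finally have "2*(a*b) \<le> a\<^sup>2 + b\<^sup>2" by linarith
  moreover have "(a + b)\<^sup>2 = a\<^sup>2 + 2*(a*b) + b\<^sup>2" by (simp add: power2_sum)
  ultimately show ?thesis by linarith
qed

lemma borel_measurable_cnj'[measurable]:
  "f \<in> borel_measurable M \<Longrightarrow> (\<lambda>x. cnj (f x)) \<in> borel_measurable M"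
  using measurable_compose[of f M borel cnj borel] borel_measurable_continuous_onI[of cnj]
  by (auto intro: continuous_intros)

definition e :: "int \<Rightarrow> real \<Rightarrow> complex" where
  "e n t = cis (of_int n * t)"

lemma e_meas[measurable]: "e n \<in> borel_measurable circ"
  unfolding e_def by (rule cont_meas_circ) (intro continuous_intros)

lemma norm_e[simp]: "cmod (e n t) = 1"
  by (simp add: e_def)

lemma cnj_e: "cnj (e n t) = e (-n) t"
  by (simp add: e_def cis_cnj)

lemma e_mult: "e n t * e m t = e (n+m) t"
  by (simp add: e_def cis_mult distrib_right)

lemma integral_e: "integral\<^sup>L circ (e k) = (if k = 0 then 2*pi else 0)"
proof (cases "k = 0")
  case True
  have "e 0 = (\<lambda>_. 1)" by (auto simp: e_def fun_eq_iff)
  moreover have "measure circ {0..2*pi} = 2*pi"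
    by (simp add: circ_def measure_restrict_space)
  ultimately show ?thesis using True by (simp add: scaleR_conv_of_real)
next
  case False
  have int: "integrable circ (e k)"
    by (rule circ.integrable_const_bound[where B=1]) auto
  have h1: "(e k has_integral (integral\<^sup>L circ (e k))) {0..2*pi}"
    using has_integral_integral_lebesgue_on[of "{0..2*pi}" "e k"] int by (simp add: circ_def)
  define F where "F t = cis (of_int k * t) / (\<i> * of_int k)" for t
  have h2: "(e k has_integral (F (2*pi) - F 0)) {0..2*pi}"
  proof (rule fundamental_theorem_of_calculus)
    fix x assume "x \<in> {0..2*pi}"
    have d: "((\<lambda>t. cis (of_int k * t)) has_derivative (\<lambda>h. (of_int k * h) *\<^sub>R (\<i> * cis (of_int k * x)))) (at x within {0..2*pi})"
      by (auto intro!: derivative_eq_intros)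
    have "((\<lambda>t. (1 / (\<i> * of_int k)) * cis (of_int k * t)) has_derivative
          (\<lambda>h. (1 / (\<i> * of_int k)) * ((of_int k * h) *\<^sub>R (\<i> * cis (of_int k * x))))) (at x within {0..2*pi})"
      by (rule has_derivative_mult_right[OF d])
    moreover have "(\<lambda>h. (1 / (\<i> * of_int k)) * ((of_int k * h) *\<^sub>R (\<i> * cis (of_int k * x)))) = (\<lambda>h. h *\<^sub>R e k x)"
      using False by (auto simp: e_def fun_eq_iff scaleR_conv_of_real field_simps)
    ultimately show "(F has_vector_derivative e k x) (at x within {0..2*pi})"
      by (simp add: F_def[abs_def] has_vector_derivative_def)
  qed auto
  have F2: "F (2*pi) = F 0"
    by (simp add: F_def cis_conv_exp mult.commute)
  from has_integral_unique[OF h1 h2] F2 False show ?thesis by simp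
qed

definition NN :: "(real \<Rightarrow> complex) \<Rightarrow> real" where
  "NN F = integral\<^sup>L circ (\<lambda>t. (cmod (F t))\<^sup>2)"

lemma fc_eq: "fourier_coeff F n = integral\<^sup>L circ (\<lambda>t. F t * cnj (e n t)) / (2*pi)"
  by (simp add: fourier_coeff_def e_def cis_cnj)

lemma L2_int: assumes "F \<in> L2_circ" shows "integrable circ F"
proof -
  have m: "F \<in> borel_measurable circ" and i: "integrable circ (\<lambda>t. (cmod (F t))\<^sup>2)"
    using assms by (auto simp: L2_circ_def)
  have i1: "integrable circ (\<lambda>t. 1 + (cmod (F t))\<^sup>2)" using i by simp
  have le: "norm (F t) \<le> norm (1 + (cmod (F t))\<^sup>2)" for t
  proof -
    have "cmod (F t) \<le> 1 + (cmod (F t))\<^sup>2"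
      by (rule aux_le1)
    then show ?thesis by simp
  qed
  show ?thesis using Bochner_Integration.integrable_bound[OF i1 m AE_I2[OF le]] .
qed

lemma L2_meas: "F \<in> L2_circ \<Longrightarrow> F \<in> borel_measurable circ"
  by (simp add: L2_circ_def)

lemma L2_sq: "F \<in> L2_circ \<Longrightarrow> integrable circ (\<lambda>t. (cmod (F t))\<^sup>2)"
  by (simp add: L2_circ_def)

lemma L2_mult_bdd:
  assumes "F \<in> L2_circ" "G \<in> borel_measurable circ" "AE t in circ. cmod (G t) \<le> B"
  shows "integrable circ (\<lambda>t. F t * G t)"
proof -
  have i: "integrable circ (\<lambda>t. \<bar>B\<bar> * cmod (F t))" using L2_int[OF assms(1)] by simp
  show ?thesis
  proof (rule Bochner_Integration.integrable_bound[OF i])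
    show "(\<lambda>t. F t * G t) \<in> borel_measurable circ" using L2_meas[OF assms(1)] assms(2) by measurable
    show "AE t in circ. norm (F t * G t) \<le> norm (\<bar>B\<bar> * cmod (F t))"
      using assms(3)
    proof eventually_elim
      case (elim t)
      then have "cmod (G t) \<le> \<bar>B\<bar>" by linarith
      then have "cmod (F t) * cmod (G t) \<le> cmod (F t) * \<bar>B\<bar>" by (rule mult_left_mono) simp
      then show ?case by (simp add: mult.commute norm_mult)
    qed
  qed
qed

lemma L2_inner:
  assumes "F \<in> L2_circ" "G \<in> L2_circ"
  shows "integrable circ (\<lambda>t. F t * cnj (G t))"
proof -
  have i: "integrable circ (\<lambda>t. (cmod (F t))\<^sup>2 + (cmod (G t))\<^sup>2)" using assms by (simp add: L2_sq)
  show ?thesis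
  proof (rule Bochner_Integration.integrable_bound[OF i])
    show "(\<lambda>t. F t * cnj (G t)) \<in> borel_measurable circ" using L2_meas[OF assms(1)] L2_meas[OF assms(2)] by measurable
    show "AE t in circ. norm (F t * cnj (G t)) \<le> norm ((cmod (F t))\<^sup>2 + (cmod (G t))\<^sup>2)"
    proof (intro AE_I2)
      fix t
      have "cmod (F t) * cmod (G t) \<le> (cmod (F t))\<^sup>2 + (cmod (G t))\<^sup>2"
        by (rule aux_prod) auto
      then show "norm (F t * cnj (G t)) \<le> norm ((cmod (F t))\<^sup>2 + (cmod (G t))\<^sup>2)"
        by (simp add: norm_mult)
    qed
  qed
qed

lemma L2_I:
  assumes "F \<in> borel_measurable circ" "AE t in circ. cmod (F t) \<le> B"
  shows "F \<in> L2_circ"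
proof -
  have "integrable circ (\<lambda>t. (cmod (F t))\<^sup>2)"
  proof (rule circ.integrable_const_bound[where B="B\<^sup>2"])
    show "AE t in circ. norm ((cmod (F t))\<^sup>2) \<le> B\<^sup>2"
      using assms(2) by eventually_elim (simp add: power_mono)
  qed (use assms(1) in measurable)
  then show ?thesis using assms by (simp add: L2_circ_def)
qed

lemma L2_e[simp]: "e n \<in> L2_circ"
  by (rule L2_I[where B=1]) auto

lemma L2_add[simp]:
  assumes "F \<in> L2_circ" "G \<in> L2_circ"
  shows "(\<lambda>t. F t + G t) \<in> L2_circ"
proof -
  have i: "integrable circ (\<lambda>t. 2 * (cmod (F t))\<^sup>2 + 2 * (cmod (G t))\<^sup>2)" using assms by (simp add: L2_sq)
  have "integrable circ (\<lambda>t. (cmod (F t + G t))\<^sup>2)"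
  proof (rule Bochner_Integration.integrable_bound[OF i])
    show "(\<lambda>t. (cmod (F t + G t))\<^sup>2) \<in> borel_measurable circ" using L2_meas[OF assms(1)] L2_meas[OF assms(2)] by measurable
    show "AE t in circ. norm ((cmod (F t + G t))\<^sup>2) \<le> norm (2 * (cmod (F t))\<^sup>2 + 2 * (cmod (G t))\<^sup>2)"
    proof (intro AE_I2)
      fix t
      have "cmod (F t + G t) \<le> cmod (F t) + cmod (G t)" by (rule norm_triangle_ineq)
      then have "(cmod (F t + G t))\<^sup>2 \<le> (cmod (F t) + cmod (G t))\<^sup>2" by (simp add: power_mono)
      also have "\<dots> \<le> 2 * (cmod (F t))\<^sup>2 + 2 * (cmod (G t))\<^sup>2"
        by (rule aux_sum2)
      finally show "norm ((cmod (F t + G t))\<^sup>2) \<le> norm (2 * (cmod (F t))\<^sup>2 + 2 * (cmod (G t))\<^sup>2)" by simp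
    qed
  qed
  moreover have "(\<lambda>t. F t + G t) \<in> borel_measurable circ" using L2_meas[OF assms(1)] L2_meas[OF assms(2)] by measurable
  ultimately show ?thesis by (simp add: L2_circ_def)
qed

lemma L2_cmult[simp]:
  assumes "F \<in> L2_circ" shows "(\<lambda>t. c * F t) \<in> L2_circ"
proof -
  have "F \<in> borel_measurable circ" using assms by (simp add: L2_circ_def)
  then have "(\<lambda>t. c * F t) \<in> borel_measurable circ" by measurable
  then show ?thesis using assms by (simp add: L2_circ_def norm_mult power_mult_distrib)
qed

lemma L2_uminus[simp]: assumes "F \<in> L2_circ" shows "(\<lambda>t. - F t) \<in> L2_circ"
  using L2_cmult[OF assms, of "-1"] by simp

lemma L2_diff[simp]:
  assumes "F \<in> L2_circ" "G \<in> L2_circ" shows "(\<lambda>t. F t - G t) \<in> L2_circ"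
  using L2_add[OF assms(1) L2_uminus[OF assms(2)]] by simp

lemma L2_sum[simp]:
  assumes "\<And>i. i \<in> I \<Longrightarrow> F i \<in> L2_circ" shows "(\<lambda>t. \<Sum>i\<in>I. F i t) \<in> L2_circ"
  using assms
proof (induction I rule: infinite_finite_induct)
  case (infinite A) then show ?case by (simp add: L2_I[where B=0])
next
  case empty then show ?case by (simp add: L2_I[where B=0])
next
  case (insert x F') then show ?case by simp
qed

lemma L2_mult_bdd2:
  assumes "F \<in> L2_circ" "G \<in> borel_measurable circ" "AE t in circ. cmod (G t) \<le> B"
  shows "(\<lambda>t. F t * G t) \<in> L2_circ"
proof -
  have i: "integrable circ (\<lambda>t. B\<^sup>2 * (cmod (F t))\<^sup>2)" using assms by (simp add: L2_sq)
  have "integrable circ (\<lambda>t. (cmod (F t * G t))\<^sup>2)"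
  proof (rule Bochner_Integration.integrable_bound[OF i])
    show "(\<lambda>t. (cmod (F t * G t))\<^sup>2) \<in> borel_measurable circ" using L2_meas[OF assms(1)] assms(2) by measurable
    show "AE t in circ. norm ((cmod (F t * G t))\<^sup>2) \<le> norm (B\<^sup>2 * (cmod (F t))\<^sup>2)"
      using assms(3)
    proof eventually_elim
      case (elim t)
      have "(cmod (G t))\<^sup>2 \<le> B\<^sup>2" by (rule power_mono[OF elim norm_ge_zero])
      then have "(cmod (F t))\<^sup>2 * (cmod (G t))\<^sup>2 \<le> (cmod (F t))\<^sup>2 * B\<^sup>2" by (rule mult_left_mono) simp
      then show ?case by (simp add: mult.commute norm_mult power_mult_distrib)
    qed
  qed
  moreover have "(\<lambda>t. F t * G t) \<in> borel_measurable circ" using L2_meas[OF assms(1)] assms(2) by measurable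
  ultimately show ?thesis by (simp add: L2_circ_def)
qed

definition ip :: "(real \<Rightarrow> complex) \<Rightarrow> (real \<Rightarrow> complex) \<Rightarrow> complex" where
  "ip G H = integral\<^sup>L circ (\<lambda>t. G t * cnj (H t))"

lemma NN_ip: "complex_of_real (NN G) = ip G G"
proof -
  have "ip G G = integral\<^sup>L circ (\<lambda>t. complex_of_real ((cmod (G t))\<^sup>2))"
    unfolding ip_def by (simp only: complex_norm_square)
  also have "\<dots> = complex_of_real (NN G)"
    by (simp only: integral_complex_of_real NN_def)
  finally show ?thesis by simp
qed

lemma fc_ip: "fourier_coeff F n = ip F (e n) / (2*pi)"
  by (simp add: fc_eq ip_def)

lemma ip_cnj: "ip H G = cnj (ip G H)"
proof -
  have "cnj (ip G H) = integral\<^sup>L circ (\<lambda>t. cnj (G t * cnj (H t)))"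
    by (simp only: ip_def Bochner_Integration.integral_cnj[symmetric])
  also have "\<dots> = ip H G" by (simp add: ip_def mult.commute)
  finally show ?thesis by simp
qed

lemma ip_e_e: "ip (e n) (e m) = (if n = m then 2*pi else 0)"
proof -
  have "(\<lambda>t. e n t * cnj (e m t)) = e (n - m)"
    by (auto simp: fun_eq_iff cnj_e e_mult)
  then show ?thesis by (simp add: ip_def integral_e)
qed

lemma ip_sum_left:
  assumes "finite I" "G \<in> L2_circ" "\<And>n. n \<in> I \<Longrightarrow> H n \<in> L2_circ"
  shows "ip (\<lambda>t. \<Sum>n\<in>I. a n * H n t) G = (\<Sum>n\<in>I. a n * ip (H n) G)"
proof -
  have "ip (\<lambda>t. \<Sum>n\<in>I. a n * H n t) G = integral\<^sup>L circ (\<lambda>t. \<Sum>n\<in>I. a n * (H n t * cnj (G t)))"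
    unfolding ip_def by (simp add: sum_distrib_right mult.assoc)
  also have "\<dots> = (\<Sum>n\<in>I. integral\<^sup>L circ (\<lambda>t. a n * (H n t * cnj (G t))))"
    by (rule Bochner_Integration.integral_sum[where f="\<lambda>n t. a n * (H n t * cnj (G t))"]) (use assms L2_inner in auto)
  also have "\<dots> = (\<Sum>n\<in>I. a n * ip (H n) G)"
    by (simp add: ip_def)
  finally show ?thesis .
qed

lemma ip_diff_left:
  assumes "F \<in> L2_circ" "G \<in> L2_circ" "H \<in> L2_circ"
  shows "ip (\<lambda>t. F t - G t) H = ip F H - ip G H"
  unfolding ip_def using assms by (simp add: left_diff_distrib L2_inner)

lemma ip_diff_right:
  assumes "F \<in> L2_circ" "G \<in> L2_circ" "H \<in> L2_circ"
  shows "ip H (\<lambda>t. F t - G t) = ip H F - ip H G"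
  using ip_diff_left[OF assms] by (metis ip_cnj complex_cnj_diff)

lemma ident:
  assumes F: "F \<in> L2_circ" and I: "finite I"
  shows "NN (\<lambda>t. F t - (\<Sum>n\<in>I. a n * e n t)) =
    NN F - 2*pi*(\<Sum>n\<in>I. (cmod (fourier_coeff F n))\<^sup>2) + 2*pi*(\<Sum>n\<in>I. (cmod (a n - fourier_coeff F n))\<^sup>2)"
proof -
  define S where "S t = (\<Sum>n\<in>I. a n * e n t)" for t
  define c where "c n = fourier_coeff F n" for n
  have S: "S \<in> L2_circ" unfolding S_def[abs_def] by simp
  have ipFe: "ip F (e n) = 2*pi * c n" for n by (simp add: c_def fc_ip)
  have ipSF: "ip S F = (\<Sum>n\<in>I. a n * (2*pi * cnj (c n)))"
    unfolding S_def[abs_def] using I F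
    by (simp add: ip_sum_left ipFe ip_cnj[of "e _" F])
  have ipFS: "ip F S = (\<Sum>n\<in>I. cnj (a n) * (2*pi * c n))"
    using ipSF by (subst ip_cnj) simp
  have ipSe: "ip S (e m) = (if m \<in> I then 2*pi * a m else 0)" for m
    unfolding S_def[abs_def] using I
    by (simp add: ip_sum_left ip_e_e if_distrib sum.If_cases cong: if_cong)
  have ipSS: "ip S S = (\<Sum>n\<in>I. a n * (2*pi * cnj (a n)))"
    unfolding S_def[abs_def] using I
    by (simp add: ip_sum_left ip_cnj[of "e _"] ipSe[unfolded S_def[abs_def]])
  have "complex_of_real (NN (\<lambda>t. F t - S t)) = ip (\<lambda>t. F t - S t) (\<lambda>t. F t - S t)"
    using F S by (simp add: NN_ip)
  also have "\<dots> = ip F F - ip F S - ip S F + ip S S"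
    using F S by (simp add: ip_diff_left ip_diff_right)
  also have "\<dots> = ip F F - 2*pi*(\<Sum>n\<in>I. c n * cnj (c n)) + 2*pi*(\<Sum>n\<in>I. (a n - c n) * cnj (a n - c n))"
    unfolding ipFS ipSF ipSS
    by (simp add: sum_distrib_left ring_distribs sum_subtractf sum.distrib algebra_simps)
  also have "\<dots> = complex_of_real (NN F - 2*pi*(\<Sum>n\<in>I. (cmod (c n))\<^sup>2) + 2*pi*(\<Sum>n\<in>I. (cmod (a n - c n))\<^sup>2))"
    by (simp only: NN_ip of_real_add of_real_diff of_real_mult of_real_sum complex_norm_square of_real_numeral)
  finally show ?thesis unfolding S_def c_def of_real_eq_iff .
qed

lemma NN_nonneg: "0 \<le> NN F"
  by (simp add: NN_def)

lemma bessel: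
  assumes "F \<in> L2_circ" "finite I"
  shows "2*pi*(\<Sum>n\<in>I. (cmod (fourier_coeff F n))\<^sup>2) \<le> NN F"
  using ident[OF assms, of "fourier_coeff F"] NN_nonneg[of "\<lambda>t. F t - (\<Sum>n\<in>I. fourier_coeff F n * e n t)"]
  by simp

lemma best:
  assumes "F \<in> L2_circ" "finite I"
  shows "NN (\<lambda>t. F t - (\<Sum>n\<in>I. fourier_coeff F n * e n t)) \<le> NN (\<lambda>t. F t - (\<Sum>n\<in>I. a n * e n t))"
  using ident[OF assms, of "fourier_coeff F"] ident[OF assms, of a]
  by (simp add: sum_nonneg)

lemma coef_bound:
  assumes "F \<in> L2_circ"
  shows "(cmod (fourier_coeff F n))\<^sup>2 \<le> NN F / (2*pi)"
  using bessel[OF assms, of "{n}"] by (simp add: field_simps)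

lemma NN_cong_AE:
  assumes "AE t in circ. cmod (F t) = cmod (G t)" "F \<in> borel_measurable circ" "G \<in> borel_measurable circ"
  shows "NN F = NN G"
  unfolding NN_def by (rule integral_cong_AE) (use assms in \<open>auto intro: borel_measurable_power\<close>)

lemma NN_cong_space:
  assumes "\<And>t. t \<in> {0..2*pi} \<Longrightarrow> F t = G t"
  shows "NN F = NN G"
  unfolding NN_def by (rule Bochner_Integration.integral_cong) (use assms in auto)

lemma sq_sum_le:
  fixes x :: "'i \<Rightarrow> complex"
  assumes "finite I"
  shows "(cmod (\<Sum>i\<in>I. x i))\<^sup>2 \<le> real (card I) * (\<Sum>i\<in>I. (cmod (x i))\<^sup>2)"
proof -
  have "cmod (\<Sum>i\<in>I. x i) \<le> (\<Sum>i\<in>I. 1 * cmod (x i))" by (simp add: norm_sum)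
  then have "(cmod (\<Sum>i\<in>I. x i))\<^sup>2 \<le> (\<Sum>i\<in>I. 1 * cmod (x i))\<^sup>2"
    by (simp add: power_mono)
  also have "\<dots> \<le> (\<Sum>i\<in>I. 1\<^sup>2) * (\<Sum>i\<in>I. (cmod (x i))\<^sup>2)"
    by (rule Cauchy_Schwarz_ineq_sum)
  finally show ?thesis by simp
qed

lemma NN_sum_le:
  assumes "finite I" "\<And>i. i \<in> I \<Longrightarrow> F i \<in> L2_circ"
  shows "NN (\<lambda>t. \<Sum>i\<in>I. F i t) \<le> real (card I) * (\<Sum>i\<in>I. NN (F i))"
proof -
  have "NN (\<lambda>t. \<Sum>i\<in>I. F i t) \<le> integral\<^sup>L circ (\<lambda>t. real (card I) * (\<Sum>i\<in>I. (cmod (F i t))\<^sup>2))"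
    unfolding NN_def
  proof (rule integral_mono)
    show "integrable circ (\<lambda>t. (cmod (\<Sum>i\<in>I. F i t))\<^sup>2)" using L2_sum[of I F] assms by (simp add: L2_sq)
    show "integrable circ (\<lambda>t. real (card I) * (\<Sum>i\<in>I. (cmod (F i t))\<^sup>2))"
      using assms by (simp add: L2_sq)
  qed (rule sq_sum_le[OF assms(1)])
  also have "\<dots> = real (card I) * (\<Sum>i\<in>I. NN (F i))"
    using assms by (simp add: NN_def integral_sum L2_sq)
  finally show ?thesis .
qed

lemma NN_add_le:
  assumes "F \<in> L2_circ" "G \<in> L2_circ"
  shows "NN (\<lambda>t. F t + G t) \<le> 2 * (NN F + NN G)"
proof (cases "F = G")
  case True
  have "NN (\<lambda>t. F t + F t) = 4 * NN F"
    by (simp add: NN_def norm_mult power_mult_distrib flip: mult_2)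
  then show ?thesis using True NN_nonneg[of F] by simp
next
  case False
  have "NN (\<lambda>t. \<Sum>i\<in>{F,G}. i t) \<le> real (card {F,G}) * (\<Sum>i\<in>{F,G}. NN i)"
    by (rule NN_sum_le) (use assms in auto)
  then show ?thesis using False by simp
qed

lemma NN_add3_le:
  assumes "F \<in> L2_circ" "G \<in> L2_circ" "H \<in> L2_circ"
  shows "NN (\<lambda>t. F t + G t + H t) \<le> 4 * (NN F + NN G + NN H)"
proof -
  have "NN (\<lambda>t. F t + G t + H t) \<le> 2 * (NN (\<lambda>t. F t + G t) + NN H)"
    using NN_add_le[of "\<lambda>t. F t + G t" H] assms by simp
  also have "\<dots> \<le> 2 * (2 * (NN F + NN G) + NN H)"
    using NN_add_le[OF assms(1,2)] by simp
  also have "\<dots> \<le> 4 * (NN F + NN G + NN H)" using NN_nonneg[of H] by simp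
  finally show ?thesis .
qed

lemma NN_bound:
  assumes "F \<in> borel_measurable circ" "\<And>t. t \<in> {0..2*pi} \<Longrightarrow> cmod (F t) \<le> B"
  shows "NN F \<le> 2*pi*B\<^sup>2"
proof -
  have B: "0 \<le> B" using assms(2)[of 0] order_trans[OF norm_ge_zero[of "F 0"]] pi_gt_zero by simp
  have "NN F \<le> integral\<^sup>L circ (\<lambda>t. B\<^sup>2)"
    unfolding NN_def
  proof (rule integral_mono)
    have "F \<in> L2_circ" by (rule L2_I[OF assms(1) AE_I2]) (use assms(2) in auto)
    then show "integrable circ (\<lambda>t. (cmod (F t))\<^sup>2)" by (simp add: L2_sq)
  qed (use assms B in \<open>auto intro: power_mono\<close>)
  also have "\<dots> = 2*pi*B\<^sup>2"
    by (simp add: circ_def measure_restrict_space)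
  finally show ?thesis .
qed

inductive tp :: "(real \<Rightarrow> complex) \<Rightarrow> bool" where
  tp0: "tp (\<lambda>t. 0)"
| tpS: "tp F \<Longrightarrow> tp (\<lambda>t. F t + c * e n t)"

lemma tp_e: "tp (\<lambda>t. c * e n t)"
  using tpS[OF tp0, of c n] by simp

lemma tp_const: "tp (\<lambda>t. c)"
  using tp_e[of c 0] by (simp add: e_def)

lemma tp_add: assumes "tp F" "tp G" shows "tp (\<lambda>t. F t + G t)"
  using assms(2)
proof (induction G rule: tp.induct)
  case tp0 then show ?case using assms(1) by simp
next
  case (tpS G c n)
  then show ?case using tp.tpS[of "\<lambda>t. F t + G t" c n] by (simp add: add.assoc)
qed

lemma tp_cmult: "tp F \<Longrightarrow> tp (\<lambda>t. c * F t)"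
proof (induction F rule: tp.induct)
  case tp0 then show ?case by (simp add: tp.tp0)
next
  case (tpS F d n)
  then show ?case using tp.tpS[of "\<lambda>t. c * F t" "c * d" n] by (simp add: ring_distribs mult.assoc)
qed

lemma tp_mult_e: "tp F \<Longrightarrow> tp (\<lambda>t. F t * e m t)"
proof (induction F rule: tp.induct)
  case tp0 then show ?case by (simp add: tp.tp0)
next
  case (tpS F d n)
  have "(\<lambda>t. (F t + d * e n t) * e m t) = (\<lambda>t. F t * e m t + d * e (n + m) t)"
    by (auto simp: fun_eq_iff ring_distribs mult.assoc e_mult)
  then show ?case using tp.tpS[OF tpS.IH, of d "n+m"] by simp
qed

lemma tp_mult: assumes "tp F" "tp G" shows "tp (\<lambda>t. F t * G t)"
  using assms(2)
proof (induction G rule: tp.induct)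
  case tp0 then show ?case by (simp add: tp.tp0)
next
  case (tpS G c n)
  have "(\<lambda>t. F t * (G t + c * e n t)) = (\<lambda>t. F t * G t + c * (F t * e n t))"
    by (auto simp: fun_eq_iff ring_distribs)
  then show ?case using tp_add[OF tpS.IH tp_cmult[OF tp_mult_e[OF assms(1)], of c n]]
    by simp
qed

lemma tp_cnj: "tp F \<Longrightarrow> tp (\<lambda>t. cnj (F t))"
proof (induction F rule: tp.induct)
  case tp0 then show ?case by (simp add: tp.tp0)
next
  case (tpS F c n)
  then show ?case using tp.tpS[OF tpS.IH, of "cnj c" "-n"] by (simp add: cnj_e)
qed

lemma tp_Re: "tp F \<Longrightarrow> tp (\<lambda>t. complex_of_real (Re (F t)))"
proof -
  assume F: "tp F"
  have "(\<lambda>t. complex_of_real (Re (F t))) = (\<lambda>t. (1/2) * (F t + cnj (F t)))"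
    by (auto simp: fun_eq_iff complex_add_cnj)
  then show ?thesis using tp_cmult[OF tp_add[OF F tp_cnj[OF F]], of "1/2"] by simp
qed

lemma tp_explicit: "tp F \<Longrightarrow> \<exists>I a. finite I \<and> F = (\<lambda>t. \<Sum>n\<in>I. a n * e n t)"
proof (induction F rule: tp.induct)
  case tp0 then show ?case by (intro exI[of _ "{}"]) auto
next
  case (tpS F c n)
  then obtain I a where I: "finite I" and F: "F = (\<lambda>t. \<Sum>n\<in>I. a n * e n t)" by blast
  define a' where "a' = a(n := (if n \<in> I then a n else 0) + c)"
  have "(\<lambda>t. F t + c * e n t) = (\<lambda>t. \<Sum>m\<in>insert n I. a' m * e m t)"
  proof
    fix t
    have s: "(\<Sum>m\<in>I - {n}. a' m * e m t) = (\<Sum>m\<in>I - {n}. a m * e m t)"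
      by (rule sum.cong) (auto simp: a'_def)
    show "F t + c * e n t = (\<Sum>m\<in>insert n I. a' m * e m t)"
    proof (cases "n \<in> I")
      case True
      then show ?thesis using I s
        by (simp add: F sum.remove[OF I True] a'_def ring_distribs insert_absorb)
    next
      case False
      then show ?thesis using I s by (simp add: F a'_def ring_distribs)
    qed
  qed
  then show ?case using I by blast
qed

lemma tp_L2: "tp F \<Longrightarrow> F \<in> L2_circ"
  using tp_explicit by fastforce

lemma tp_cont: "tp F \<Longrightarrow> continuous_on UNIV F"
proof (induction F rule: tp.induct)
  case tp0 then show ?case by simp
next
  case (tpS F c n)
  then show ?case unfolding e_def by (intro continuous_intros)
qed

lemma tp_meas: "tp F \<Longrightarrow> F \<in> borel_measurable circ"
  by (rule cont_meas_circ) (use tp_cont continuous_on_subset in blast)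

lemma SW:
  fixes f :: "complex \<Rightarrow> real"
  assumes f: "continuous_on (sphere 0 1) f" and eps: "0 < \<epsilon>"
  shows "\<exists>P. tp P \<and> (\<forall>t. \<bar>f (cis t) - Re (P t)\<bar> < \<epsilon>)"
proof -
  define Q where "Q g \<longleftrightarrow> continuous_on (sphere (0::complex) 1) g \<and> (\<exists>P. tp P \<and> (\<forall>t. g (cis t) = Re (P t)))" for g
  have "\<exists>g. Q g \<and> (\<forall>x\<in>sphere 0 1. \<bar>f x - g x\<bar> < \<epsilon>)"
  proof (rule Stone_Weierstrass_HOL[OF compact_sphere _ _ _ _ _ f eps])
    show "Q (\<lambda>x. c)" for c
      unfolding Q_def using tp_const[of "complex_of_real c"] by (auto intro!: exI[of _ "\<lambda>t. complex_of_real c"])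
    show "continuous_on (sphere 0 1) g" if "Q g" for g using that by (simp add: Q_def)
    show "Q (\<lambda>x. g x + h x)" if "Q g \<and> Q h" for g h
    proof -
      from that obtain P1 P2 where P: "tp P1" "tp P2" "\<forall>t. g (cis t) = Re (P1 t)" "\<forall>t. h (cis t) = Re (P2 t)"
        and c: "continuous_on (sphere 0 1) g" "continuous_on (sphere 0 1) h"
        unfolding Q_def by blast
      show ?thesis unfolding Q_def
        using P c tp_add[OF P(1,2)] by (auto intro!: continuous_on_add exI[of _ "\<lambda>t. P1 t + P2 t"])
    qed
    show "Q (\<lambda>x. g x * h x)" if "Q g \<and> Q h" for g h
    proof -
      from that obtain P1 P2 where P: "tp P1" "tp P2" "\<forall>t. g (cis t) = Re (P1 t)" "\<forall>t. h (cis t) = Re (P2 t)"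
        and c: "continuous_on (sphere 0 1) g" "continuous_on (sphere 0 1) h"
        unfolding Q_def by blast
      define P where "P t = (1/2) * (P1 t * P2 t + P1 t * cnj (P2 t))" for t
      have tpP: "tp P" unfolding P_def[abs_def]
        by (intro tp_cmult tp_add tp_mult tp_cnj P(1,2))
      have "Re (P t) = Re (P1 t) * Re (P2 t)" for t
        by (simp add: P_def)
      then show ?thesis unfolding Q_def
        using P c tpP by (auto intro!: continuous_on_mult exI[of _ P])
    qed
    show "\<exists>g. Q g \<and> g x \<noteq> g y" if "x \<in> sphere 0 1 \<and> y \<in> sphere 0 1 \<and> x \<noteq> y" for x y
    proof (cases "Re x = Re y")
      case False
      have "Q Re" unfolding Q_def
        using tp_e[of 1 1] by (auto intro!: continuous_intros exI[of _ "\<lambda>t. 1 * e 1 t"] simp: e_def)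
      then show ?thesis using False by blast
    next
      case True
      then have "Im x \<noteq> Im y" using that complex_eqI by blast
      moreover have "Q Im" unfolding Q_def
        using tp_e[of "-\<i>" 1] by (auto intro!: continuous_intros exI[of _ "\<lambda>t. -\<i> * e 1 t"] simp: e_def)
      ultimately show ?thesis by blast
    qed
  qed
  then obtain g P where P: "tp P" "\<forall>t. g (cis t) = Re (P t)" "\<forall>x\<in>sphere 0 1. \<bar>f x - g x\<bar> < \<epsilon>"
    unfolding Q_def by blast
  have "\<bar>f (cis t) - Re (P t)\<bar> < \<epsilon>" for t
  proof -
    have "cis t \<in> sphere 0 1" by simp
    then show ?thesis using P(2,3) by metis
  qed
  then show ?thesis using P(1) by blast
qed

lemma Icc_leb: "{0..2*pi} \<in> sets lebesgue" by simp

lemma sets_circ: "A \<in> sets circ \<longleftrightarrow> A \<subseteq> {0..2*pi} \<and> A \<in> sets lebesgue"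
  unfolding circ_def by (rule sets_restrict_space_iff) simp

lemma measure_circ: "A \<subseteq> {0..2*pi} \<Longrightarrow> measure circ A = measure lebesgue A"
  unfolding circ_def by (rule measure_restrict_space) auto

lemma null_circ: "finite N \<Longrightarrow> N \<subseteq> {0..2*pi} \<Longrightarrow> N \<in> null_sets circ"
  unfolding circ_def
  by (subst null_sets_restrict_space) (auto simp: negligible_iff_null_sets[symmetric])

lemma cis_inj:
  assumes "t \<in> {0<..<2*pi}" "s \<in> {0..2*pi}" "cis t = cis s"
  shows "s = t"
proof -
  have At: "Arg2pi (cis t) = t"
    by (rule Arg2pi_unique[of 1]) (use assms(1) in \<open>auto simp: cis_conv_exp\<close>)
  show ?thesis
  proof (cases "s = 2*pi")
    case True
    then have "cis s = 1" by simp
    then have "Arg2pi (cis s) = 0" using Arg2pi_of_real[of 1] by simp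
    then show ?thesis using At assms by simp
  next
    case False
    then have "Arg2pi (cis s) = s"
      by (intro Arg2pi_unique[of 1]) (use assms(2) in \<open>auto simp: cis_conv_exp\<close>)
    then show ?thesis using At assms by simp
  qed
qed

lemma ind_complex: "(indicator X t :: complex) = complex_of_real (indicator X t)"
  by (simp add: indicator_def)

lemma ind_L2: "X \<in> sets circ \<Longrightarrow> (\<lambda>t. indicator X t :: complex) \<in> L2_circ"
  by (rule L2_I[where B=1]) (auto simp: indicator_def)

lemma ind_approx:
  assumes A: "A \<in> sets circ" and eps: "0 < \<epsilon>"
  shows "\<exists>P. tp P \<and> NN (\<lambda>t. indicator A t - P t) < \<epsilon>"
proof -
  define \<delta> where "\<delta> = \<epsilon>/12"
  have \<delta>: "0 < \<delta>" using eps by (simp add: \<delta>_def)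
  from A have A0: "A \<subseteq> {0..2*pi}" "A \<in> sets lebesgue" by (simp_all add: sets_circ)
  obtain T where T: "open T" "A \<subseteq> T" "(T - A) \<in> lmeasurable" "emeasure lebesgue (T - A) < ennreal \<delta>"
    using sets_lebesgue_outer_open[OF A0(2) \<delta>] by blast
  define T' where "T' = T \<inter> {0<..<2*pi}"
  define A' where "A' = A \<inter> {0<..<2*pi}"
  define K where "K = {0..2*pi} - T'"
  have openT': "open T'" unfolding T'_def using T(1) by auto
  have T'c: "T' \<in> sets circ" unfolding sets_circ T'_def using T(1) by auto
  have A'c: "A' \<in> sets circ" unfolding sets_circ A'_def using A0 by auto
  have K: "compact K"
  proof -
    have "K = (- T') \<inter> {0..2*pi}" by (auto simp: K_def)
    then show ?thesis using closed_Int_compact[OF closed_Compl[OF openT'] compact_Icc] by simp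
  qed
  have K0: "0 \<in> K" by (auto simp: K_def T'_def)
  define Kc where "Kc = cis ` K"
  have Kc: "compact Kc" unfolding Kc_def
    by (rule compact_continuous_image[OF _ K]) (intro continuous_intros)
  then have Kcl: "closed Kc" by (rule compact_imp_closed)
  have Kne: "Kc \<noteq> {}" using K0 by (auto simp: Kc_def)
  define \<phi> where "\<phi> m z = min 1 (real m * infdist z Kc)" for m :: nat and z
  have \<phi>_cont: "continuous_on UNIV (\<phi> m)" for m
    unfolding \<phi>_def by (intro continuous_intros)
  have \<phi>01: "0 \<le> \<phi> m z" "\<phi> m z \<le> 1" for m z
    unfolding \<phi>_def by (auto simp: infdist_nonneg)
  have lim: "(\<lambda>m. \<phi> m (cis t)) \<longlonglongrightarrow> indicator T' t" if t: "t \<in> {0..2*pi}" for t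
  proof (cases "t \<in> T'")
    case True
    have "cis t \<notin> Kc"
    proof
      assume "cis t \<in> Kc"
      then obtain s where s: "s \<in> K" "cis t = cis s" by (auto simp: Kc_def)
      have "s = t" by (rule cis_inj) (use True s in \<open>auto simp: T'_def K_def\<close>)
      then show False using s True by (simp add: K_def)
    qed
    then have d: "0 < infdist (cis t) Kc" by (rule infdist_pos_not_in_closed[OF Kcl Kne])
    obtain N :: nat where N: "1 / infdist (cis t) Kc \<le> real N" using real_arch_simple by blast
    have "\<phi> m (cis t) = 1" if "N \<le> m" for m
    proof -
      have "1 / infdist (cis t) Kc \<le> real m" using N that by linarith
      then have "1 \<le> real m * infdist (cis t) Kc" using d by (simp add: field_simps)
      then show ?thesis by (simp add: \<phi>_def)
    qed
    then have "eventually (\<lambda>m. \<phi> m (cis t) = 1) sequentially" by (auto simp: eventually_sequentially)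
    then have "(\<lambda>m. \<phi> m (cis t)) \<longlonglongrightarrow> 1" by (rule tendsto_eventually)
    then show ?thesis using True by simp
  next
    case False
    then have "t \<in> K" using t by (simp add: K_def)
    then have "cis t \<in> Kc" by (simp add: Kc_def)
    then have "\<phi> m (cis t) = 0" for m by (simp add: \<phi>_def)
    then show ?thesis using False by simp
  qed
  have \<phi>meas: "(\<lambda>t. complex_of_real (\<phi> m (cis t))) \<in> borel_measurable circ" for m
    by (rule cont_meas_circ) (intro continuous_on_compose2[OF \<phi>_cont] continuous_intros, auto)
  have \<phi>L2: "(\<lambda>t. complex_of_real (\<phi> m (cis t))) \<in> L2_circ" for m
    by (rule L2_I[OF \<phi>meas, where B=1]) (use \<phi>01 in auto)
  define s where "s m t = (cmod (indicator T' t - complex_of_real (\<phi> m (cis t))))\<^sup>2" for m t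
  have "(\<lambda>m. integral\<^sup>L circ (s m)) \<longlonglongrightarrow> integral\<^sup>L circ (\<lambda>t. 0)"
  proof (rule integral_dominated_convergence[where w="\<lambda>t. 1"])
    show "(\<lambda>t. 0::real) \<in> borel_measurable circ" by simp
    show "s m \<in> borel_measurable circ" for m
      unfolding s_def using \<phi>meas[of m] T'c by measurable
    show "integrable circ (\<lambda>t. 1::real)" by simp
    show "AE t in circ. (\<lambda>m. s m t) \<longlonglongrightarrow> 0"
    proof (rule AE_I2)
      fix t assume "t \<in> space circ"
      then have "(\<lambda>m. s m t) \<longlonglongrightarrow> (cmod (indicator T' t - complex_of_real (indicator T' t)))\<^sup>2"
        unfolding s_def using lim[of t] by (intro tendsto_intros) auto
      then show "(\<lambda>m. s m t) \<longlonglongrightarrow> 0" by (simp add: ind_complex)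
    qed
    show "AE t in circ. norm (s m t) \<le> 1" for m
    proof (rule AE_I2)
      fix t
      have "\<bar>indicator T' t - \<phi> m (cis t)\<bar> \<le> 1" using \<phi>01[of m "cis t"] by (auto simp: indicator_def)
      then have "(indicator T' t - \<phi> m (cis t))\<^sup>2 \<le> 1"
        by (simp add: abs_square_le_1)
      then show "norm (s m t) \<le> 1"
        by (simp add: s_def ind_complex flip: of_real_diff)
    qed
  qed
  then have "(\<lambda>m. NN (\<lambda>t. indicator T' t - complex_of_real (\<phi> m (cis t)))) \<longlonglongrightarrow> 0"
    by (simp add: NN_def s_def[abs_def])
  from order_tendstoD(2)[OF this \<delta>]
  obtain m where m: "NN (\<lambda>t. indicator T' t - complex_of_real (\<phi> m (cis t))) < \<delta>"
    by (auto simp: eventually_sequentially)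
  define \<epsilon>' where "\<epsilon>' = sqrt (\<delta> / (2*pi))"
  have \<epsilon>': "0 < \<epsilon>'" using \<delta> by (simp add: \<epsilon>'_def)
  obtain P where P: "tp P" "\<And>t. \<bar>\<phi> m (cis t) - Re (P t)\<bar> < \<epsilon>'"
    using SW[OF continuous_on_subset[OF \<phi>_cont] \<epsilon>'] by blast
  define Q where "Q t = complex_of_real (Re (P t))" for t
  have Q: "tp Q" unfolding Q_def[abs_def] by (rule tp_Re[OF P(1)])
  have NZ: "NN (\<lambda>t. complex_of_real (\<phi> m (cis t)) - Q t) \<le> \<delta>"
  proof -
    have "NN (\<lambda>t. complex_of_real (\<phi> m (cis t)) - Q t) \<le> 2*pi*\<epsilon>'\<^sup>2"
    proof (rule NN_bound)
      show "(\<lambda>t. complex_of_real (\<phi> m (cis t)) - Q t) \<in> borel_measurable circ"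
        using \<phi>meas[of m] tp_meas[OF Q] by measurable
      show "cmod (complex_of_real (\<phi> m (cis t)) - Q t) \<le> \<epsilon>'" for t
        using P(2)[of t] by (simp add: Q_def flip: of_real_diff)
    qed
    also have "\<dots> = \<delta>" using \<delta> by (simp add: \<epsilon>'_def)
    finally show ?thesis .
  qed
  have NX: "NN (\<lambda>t. indicator A t - indicator T' t) < \<delta>"
  proof -
    have null: "{0, 2*pi} \<in> null_sets circ" by (rule null_circ) auto
    have "NN (\<lambda>t. indicator A t - indicator T' t) = NN (\<lambda>t. indicator A' t - indicator T' t)"
    proof (rule NN_cong_AE)
      show "AE t in circ. cmod (indicator A t - indicator T' t) = cmod (indicator A' t - indicator T' t)"
        by (rule AE_I'[OF null]) (auto simp: A'_def indicator_def)
      show "(\<lambda>t. indicator A t - indicator T' t :: complex) \<in> borel_measurable circ"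
        using A T'c by measurable
      show "(\<lambda>t. indicator A' t - indicator T' t :: complex) \<in> borel_measurable circ"
        using A'c T'c by measurable
    qed
    also have "\<dots> \<le> integral\<^sup>L circ (indicator ((T - A) \<inter> {0..2*pi}))"
      unfolding NN_def
    proof (rule integral_mono)
      show "integrable circ (\<lambda>t. (cmod (indicator A' t - indicator T' t))\<^sup>2)"
        using L2_diff[OF ind_L2[OF A'c] ind_L2[OF T'c]] by (simp add: L2_sq)
      have "(T - A) \<inter> {0..2*pi} \<in> sets circ" unfolding sets_circ using T(3) by auto
      then show "integrable circ (indicator ((T - A) \<inter> {0..2*pi}) :: real \<Rightarrow> real)"
        by (intro circ.integrable_const_bound[where B=1]) (auto simp: indicator_def)
      show "(cmod (indicator A' t - indicator T' t))\<^sup>2 \<le> indicator ((T - A) \<inter> {0..2*pi}) t" for t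
        using T(2) by (auto simp: indicator_def A'_def T'_def)
    qed
    also have "\<dots> = measure lebesgue ((T - A) \<inter> {0..2*pi})"
      by (simp add: measure_circ Int_absorb2)
    also have "\<dots> \<le> measure lebesgue (T - A)"
      by (rule measure_mono_fmeasurable) (use T(3) in auto)
    also have "\<dots> < \<delta>"
      using T(4) emeasure_eq_measure2[OF T(3)] \<delta> by (simp add: ennreal_less_iff)
    finally show ?thesis .
  qed
  have "NN (\<lambda>t. indicator A t - Q t) =
        NN (\<lambda>t. (indicator A t - indicator T' t) + (indicator T' t - complex_of_real (\<phi> m (cis t)))
                + (complex_of_real (\<phi> m (cis t)) - Q t))"
    by simp
  also have "\<dots> \<le> 4 * (NN (\<lambda>t. indicator A t - indicator T' t) +
        NN (\<lambda>t. indicator T' t - complex_of_real (\<phi> m (cis t))) + NN (\<lambda>t. complex_of_real (\<phi> m (cis t)) - Q t))"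
    by (rule NN_add3_le) (use ind_L2[OF A] ind_L2[OF T'c] \<phi>L2[of m] tp_L2[OF Q] in auto)
  also have "\<dots> < \<epsilon>" using NX m NZ by (simp add: \<delta>_def)
  finally show ?thesis using Q by blast
qed

lemma tp_sum: "(\<And>i. i \<in> I \<Longrightarrow> tp (P i)) \<Longrightarrow> tp (\<lambda>t. \<Sum>i\<in>I. P i t)"
proof (induction I rule: infinite_finite_induct)
  case (infinite A) then show ?case by (simp add: tp.tp0)
next
  case empty then show ?case by (simp add: tp.tp0)
next
  case (insert x F) then show ?case by (simp add: tp_add)
qed

lemma NN_cmult: "NN (\<lambda>t. c * G t) = (cmod c)\<^sup>2 * NN G"
  by (simp add: NN_def norm_mult power_mult_distrib)

lemma simple_approx:
  fixes s :: "real \<Rightarrow> complex"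
  assumes s: "simple_function circ s" and eps: "0 < \<epsilon>"
  shows "\<exists>P. tp P \<and> NN (\<lambda>t. s t - P t) < \<epsilon>"
proof -
  define V where "V = s ` space circ"
  have V: "finite V" using simple_functionD(1)[OF s] by (simp add: V_def)
  define X where "X y = s -` {y} \<inter> space circ" for y
  have X: "X y \<in> sets circ" for y using simple_functionD(2)[OF s] by (simp add: X_def)
  define n where "n = real (card V)"
  define C where "C = n * (\<Sum>y\<in>V. (cmod y)\<^sup>2) + 1"
  have C: "1 \<le> C" by (simp add: C_def n_def sum_nonneg)
  define \<eta> where "\<eta> = \<epsilon> / C"
  have \<eta>: "0 < \<eta>" using C eps by (simp add: \<eta>_def)
  have "\<forall>y. \<exists>P. tp P \<and> NN (\<lambda>t. indicator (X y) t - P t) < \<eta>"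
    using ind_approx[OF X \<eta>] by blast
  then obtain Pf where Pf: "\<And>y. tp (Pf y)" "\<And>y. NN (\<lambda>t. indicator (X y) t - Pf y t) < \<eta>"
    by metis
  define P where "P t = (\<Sum>y\<in>V. y * Pf y t)" for t
  have tpP: "tp P" unfolding P_def[abs_def] by (intro tp_sum tp_cmult Pf(1))
  have rep: "s t = (\<Sum>y\<in>V. y * indicator (X y) t)" if t: "t \<in> space circ" for t
  proof -
    have "(\<Sum>y\<in>V. y * indicator (X y) t) = (\<Sum>y\<in>V. if y = s t then y else 0)"
      by (rule sum.cong) (use t in \<open>auto simp: X_def indicator_def\<close>)
    also have "\<dots> = s t" using V t by (simp add: V_def)
    finally show ?thesis by simp
  qed
  have "NN (\<lambda>t. s t - P t) = NN (\<lambda>t. \<Sum>y\<in>V. y * (indicator (X y) t - Pf y t))"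
    by (rule NN_cong_space) (simp add: rep P_def sum_subtractf ring_distribs)
  also have "\<dots> \<le> n * (\<Sum>y\<in>V. NN (\<lambda>t. y * (indicator (X y) t - Pf y t)))"
    unfolding n_def
    by (rule NN_sum_le[OF V]) (use ind_L2[OF X] tp_L2[OF Pf(1)] in auto)
  also have "\<dots> = n * (\<Sum>y\<in>V. (cmod y)\<^sup>2 * NN (\<lambda>t. indicator (X y) t - Pf y t))"
    by (simp add: NN_cmult)
  also have "\<dots> \<le> n * (\<Sum>y\<in>V. (cmod y)\<^sup>2 * \<eta>)"
    by (intro mult_left_mono sum_mono) (use Pf(2) less_imp_le in \<open>auto simp: n_def\<close>)
  also have "\<dots> = (C - 1) * \<eta>" by (simp add: C_def sum_distrib_right)
  also have "\<dots> < C * \<eta>" using \<eta> by simp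
  also have "\<dots> = \<epsilon>" using C by (simp add: \<eta>_def)
  finally show ?thesis using tpP by blast
qed

lemma density:
  assumes F: "F \<in> L2_circ" and eps: "0 < \<epsilon>"
  shows "\<exists>P. tp P \<and> NN (\<lambda>t. F t - P t) < \<epsilon>"
proof -
  have Fm: "F \<in> borel_measurable circ" using F by (simp add: L2_circ_def)
  obtain S where S: "\<And>i. simple_function circ (S i)"
    "\<And>x. x \<in> space circ \<Longrightarrow> (\<lambda>i. S i x) \<longlonglongrightarrow> F x"
    "\<And>i x. x \<in> space circ \<Longrightarrow> dist (S i x) 0 \<le> 2 * dist (F x) 0"
    using borel_measurable_implies_sequence_metric[OF Fm, of 0] by blast
  have Sm: "S i \<in> borel_measurable circ" for i by (rule borel_measurable_simple_function[OF S(1)])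
  have Sb: "cmod (S i x) \<le> 2 * cmod (F x)" if "x \<in> space circ" for i x using S(3)[OF that] by simp
  have SL2: "S i \<in> L2_circ" for i
  proof -
    have "integrable circ (\<lambda>t. (cmod (S i t))\<^sup>2)"
    proof (rule Bochner_Integration.integrable_bound[where f="\<lambda>t. 4 * (cmod (F t))\<^sup>2"])
      show "integrable circ (\<lambda>t. 4 * (cmod (F t))\<^sup>2)" using F by (simp add: L2_sq)
      show "(\<lambda>t. (cmod (S i t))\<^sup>2) \<in> borel_measurable circ" using Sm by measurable
      show "AE t in circ. norm ((cmod (S i t))\<^sup>2) \<le> norm (4 * (cmod (F t))\<^sup>2)"
      proof (rule AE_I2)
        fix t assume t: "t \<in> space circ"
        have "(cmod (S i t))\<^sup>2 \<le> (2 * cmod (F t))\<^sup>2" by (rule power_mono[OF Sb[OF t] norm_ge_zero])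
        then show "norm ((cmod (S i t))\<^sup>2) \<le> norm (4 * (cmod (F t))\<^sup>2)" by (simp add: power_mult_distrib)
      qed
    qed
    then show ?thesis using Sm by (simp add: L2_circ_def)
  qed
  have "(\<lambda>i. integral\<^sup>L circ (\<lambda>t. (cmod (F t - S i t))\<^sup>2)) \<longlonglongrightarrow> integral\<^sup>L circ (\<lambda>t. 0)"
  proof (rule integral_dominated_convergence[where w="\<lambda>t. 9 * (cmod (F t))\<^sup>2"])
    show "(\<lambda>t. 0::real) \<in> borel_measurable circ" by simp
    show "(\<lambda>t. (cmod (F t - S i t))\<^sup>2) \<in> borel_measurable circ" for i using Sm Fm by measurable
    show "integrable circ (\<lambda>t. 9 * (cmod (F t))\<^sup>2)" using F by (simp add: L2_sq)
    show "AE t in circ. (\<lambda>i. (cmod (F t - S i t))\<^sup>2) \<longlonglongrightarrow> 0"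
    proof (rule AE_I2)
      fix t assume t: "t \<in> space circ"
      have "(\<lambda>i. (cmod (F t - S i t))\<^sup>2) \<longlonglongrightarrow> (cmod (F t - F t))\<^sup>2"
        by (intro tendsto_intros S(2)[OF t])
      then show "(\<lambda>i. (cmod (F t - S i t))\<^sup>2) \<longlonglongrightarrow> 0" by simp
    qed
    show "AE t in circ. norm ((cmod (F t - S i t))\<^sup>2) \<le> 9 * (cmod (F t))\<^sup>2" for i
    proof (rule AE_I2)
      fix t assume t: "t \<in> space circ"
      have "cmod (F t - S i t) \<le> cmod (F t) + cmod (S i t)" by (rule norm_triangle_ineq4)
      also have "\<dots> \<le> 3 * cmod (F t)" using Sb[OF t, of i] by simp
      finally have "(cmod (F t - S i t))\<^sup>2 \<le> (3 * cmod (F t))\<^sup>2" by (rule power_mono) simp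
      then show "norm ((cmod (F t - S i t))\<^sup>2) \<le> 9 * (cmod (F t))\<^sup>2" by (simp add: power_mult_distrib)
    qed
  qed
  then have "(\<lambda>i. NN (\<lambda>t. F t - S i t)) \<longlonglongrightarrow> 0" by (simp add: NN_def)
  from order_tendstoD(2)[OF this, of "\<epsilon>/4"] eps
  obtain i where i: "NN (\<lambda>t. F t - S i t) < \<epsilon>/4"
    by (auto simp: eventually_sequentially)
  obtain P where P: "tp P" "NN (\<lambda>t. S i t - P t) < \<epsilon>/4"
    using simple_approx[OF S(1)[of i], of "\<epsilon>/4"] eps by auto
  have "NN (\<lambda>t. F t - P t) = NN (\<lambda>t. (F t - S i t) + (S i t - P t))" by simp
  also have "\<dots> \<le> 2 * (NN (\<lambda>t. F t - S i t) + NN (\<lambda>t. S i t - P t))"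
    by (rule NN_add_le) (use F SL2[of i] tp_L2[OF P(1)] in auto)
  also have "\<dots> < \<epsilon>" using i P(2) by simp
  finally show ?thesis using P(1) by blast
qed

lemma approx:
  assumes F: "F \<in> L2_circ" and eps: "0 < \<epsilon>"
  shows "\<exists>I. finite I \<and> NN (\<lambda>t. F t - (\<Sum>n\<in>I. fourier_coeff F n * e n t)) < \<epsilon>"
proof -
  obtain P where P: "tp P" "NN (\<lambda>t. F t - P t) < \<epsilon>" using density[OF F eps] by blast
  obtain I a where I: "finite I" "P = (\<lambda>t. \<Sum>n\<in>I. a n * e n t)" using tp_explicit[OF P(1)] by blast
  have "NN (\<lambda>t. F t - (\<Sum>n\<in>I. fourier_coeff F n * e n t)) \<le> NN (\<lambda>t. F t - P t)"
    unfolding I(2) by (rule best[OF F I(1)])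
  then show ?thesis using P(2) I(1) by force
qed

lemma fc_diff:
  assumes "F \<in> L2_circ" "G \<in> L2_circ"
  shows "fourier_coeff (\<lambda>t. F t - G t) n = fourier_coeff F n - fourier_coeff G n"
  using assms by (simp add: fc_ip ip_diff_left diff_divide_distrib)

lemma fc_add:
  assumes "F \<in> L2_circ" "G \<in> L2_circ"
  shows "fourier_coeff (\<lambda>t. F t + G t) n = fourier_coeff F n + fourier_coeff G n"
  using fc_diff[of "\<lambda>t. F t + G t" G n] assms by simp

lemma fc_sum:
  assumes "finite J" "\<And>j. j \<in> J \<Longrightarrow> H j \<in> L2_circ"
  shows "fourier_coeff (\<lambda>t. \<Sum>j\<in>J. b j * H j t) n = (\<Sum>j\<in>J. b j * fourier_coeff (H j) n)"
  using assms by (simp add: fc_ip ip_sum_left sum_divide_distrib)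

lemma fc_e: "fourier_coeff (e j) n = (if j = n then 1 else 0)"
  by (simp add: fc_ip ip_e_e)

lemma fc_cnj_e:
  "fourier_coeff (\<lambda>t. cnj (\<theta> t) * e j t) n = cnj (fourier_coeff \<theta> (j - n))"
proof -
  have eq: "cnj (\<theta> t) * e j t * cnj (e n t) = cnj (\<theta> t * cnj (e (j - n) t))" for t
    by (simp add: cnj_e e_mult mult.assoc)
  have "integral\<^sup>L circ (\<lambda>t. cnj (\<theta> t) * e j t * cnj (e n t)) = integral\<^sup>L circ (\<lambda>t. cnj (\<theta> t * cnj (e (j - n) t)))"
    by (simp only: eq)
  also have "\<dots> = cnj (integral\<^sup>L circ (\<lambda>t. \<theta> t * cnj (e (j - n) t)))"
    by (rule Bochner_Integration.integral_cnj)
  finally show ?thesis by (simp add: fc_eq)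
qed

lemma fc_e_mult:
  "fourier_coeff (\<lambda>t. e j t * \<theta> t) n = fourier_coeff \<theta> (n - j)"
proof -
  have "(\<lambda>t. e j t * \<theta> t * cnj (e n t)) = (\<lambda>t. \<theta> t * cnj (e (n - j) t))"
    by (auto simp: fun_eq_iff cnj_e e_mult mult.commute mult.left_commute)
  then show ?thesis by (simp add: fc_eq)
qed

lemma inner_props:
  assumes "inner_fun \<theta>"
  shows "\<theta> \<in> borel_measurable circ" "AE t in circ. cmod (\<theta> t) = 1"
    "\<And>n. n < 0 \<Longrightarrow> fourier_coeff \<theta> n = 0"
  using assms by (auto simp: inner_fun_def Hinf_def)

lemma L2_cnj_mult:
  assumes "inner_fun \<theta>" "F \<in> L2_circ"
  shows "(\<lambda>t. cnj (\<theta> t) * F t) \<in> L2_circ"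
proof -
  note th = inner_props[OF assms(1)]
  have "(\<lambda>t. F t * cnj (\<theta> t)) \<in> L2_circ"
    by (rule L2_mult_bdd2[OF assms(2), where B=1]) (use th in \<open>auto elim: AE_mp\<close>)
  then show ?thesis by (simp add: mult.commute)
qed

lemma L2_mult_inner:
  assumes "inner_fun \<theta>" "F \<in> L2_circ"
  shows "(\<lambda>t. F t * \<theta> t) \<in> L2_circ"
proof -
  note th = inner_props[OF assms(1)]
  show ?thesis
    by (rule L2_mult_bdd2[OF assms(2), where B=1]) (use th in \<open>auto elim: AE_mp\<close>)
qed

lemma H2_props:
  assumes "f \<in> H2"
  shows "f \<in> L2_circ" "\<And>n. n < 0 \<Longrightarrow> fourier_coeff f n = 0"
  using assms by (auto simp: H2_def)

lemma sum_tail_bound: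
  fixes g :: "int \<Rightarrow> real"
  assumes "finite I'" "\<And>n. 0 \<le> g n" "\<And>n. n < 0 \<Longrightarrow> g n = 0"
  shows "\<exists>B. (\<Sum>n\<in>I'. g n) \<le> (\<Sum>m<B. g (int m))"
proof -
  define B where "B = nat (Max (insert 0 I')) + 1"
  have "(\<Sum>n\<in>I'. g n) = (\<Sum>n\<in>I' \<inter> {0..}. g n)"
  proof (rule sum.mono_neutral_right[OF assms(1)])
    show "\<forall>i\<in>I' - I' \<inter> {0..}. g i = 0"
    proof
      fix i assume "i \<in> I' - I' \<inter> {0..}"
      then have "i < 0" by auto
      then show "g i = 0" by (rule assms(3))
    qed
  qed auto
  also have "\<dots> \<le> (\<Sum>n\<in>int ` {..<B}. g n)"
  proof (rule sum_mono2)
    show "I' \<inter> {0..} \<subseteq> int ` {..<B}"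
    proof
      fix n assume n: "n \<in> I' \<inter> {0..}"
      then have "n \<le> Max (insert 0 I')" using assms(1) by auto
      then have "nat n < B" using n by (simp add: B_def)
      moreover have "n = int (nat n)" using n by simp
      ultimately show "n \<in> int ` {..<B}" by blast
    qed
  qed (use assms in auto)
  also have "\<dots> = (\<Sum>m<B. g (int m))"
    by (subst sum.reindex) auto
  finally show ?thesis by blast
qed

lemma tail_real:
  assumes th: "inner_fun \<theta>" and f: "f \<in> H2" and eps: "0 < \<epsilon>"
  shows "\<exists>B. (\<Sum>m\<in>{k..<M}. (cmod (fourier_coeff (\<lambda>t. cnj (\<theta> t) * f t) (int m)))\<^sup>2)
            \<le> (\<Sum>m<B. if k \<le> m then (cmod (fourier_coeff f (int m)))\<^sup>2 else 0) + \<epsilon>"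
proof -
  note thp = inner_props[OF th]
  note fp = H2_props[OF f]
  define J where "J = {0..<int k}"
  have J: "finite J" by (simp add: J_def)
  define h where "h t = f t - (\<Sum>j\<in>J. fourier_coeff f j * e j t)" for t
  have hL2: "h \<in> L2_circ" unfolding h_def[abs_def] using fp(1) by simp
  have fch: "fourier_coeff h n = (if int k \<le> n then fourier_coeff f n else 0)" for n
  proof -
    have "fourier_coeff h n = fourier_coeff f n - (\<Sum>j\<in>J. fourier_coeff f j * fourier_coeff (e j) n)"
      unfolding h_def[abs_def] using fp(1) J by (simp add: fc_diff fc_sum)
    also have "(\<Sum>j\<in>J. fourier_coeff f j * fourier_coeff (e j) n) = (if n \<in> J then fourier_coeff f n else 0)"
      using J by (simp add: fc_e if_distrib cong: if_cong)
    finally show ?thesis using fp(2)[of n] by (auto simp: J_def)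
  qed
  define G where "G t = cnj (\<theta> t) * h t" for t
  have GL2: "G \<in> L2_circ" unfolding G_def[abs_def] by (rule L2_cnj_mult[OF th hL2])
  have fcG: "fourier_coeff G n = fourier_coeff (\<lambda>t. cnj (\<theta> t) * f t) n" if n: "int k \<le> n" for n
  proof -
    have "G = (\<lambda>t. cnj (\<theta> t) * f t - (\<Sum>j\<in>J. fourier_coeff f j * (cnj (\<theta> t) * e j t)))"
      by (auto simp: fun_eq_iff G_def h_def ring_distribs sum_distrib_left mult.left_commute)
    then have "fourier_coeff G n = fourier_coeff (\<lambda>t. cnj (\<theta> t) * f t) n
        - (\<Sum>j\<in>J. fourier_coeff f j * fourier_coeff (\<lambda>t. cnj (\<theta> t) * e j t) n)"
      using J L2_cnj_mult[OF th fp(1)] L2_cnj_mult[OF th L2_e]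
      by (simp add: fc_diff fc_sum)
    also have "(\<Sum>j\<in>J. fourier_coeff f j * fourier_coeff (\<lambda>t. cnj (\<theta> t) * e j t) n) = 0"
      by (rule sum.neutral) (use n thp(3) in \<open>auto simp: fc_cnj_e J_def\<close>)
    finally show ?thesis by simp
  qed
  have NNG: "NN G = NN h"
    by (rule NN_cong_AE) (use thp(2) L2_meas[OF GL2] L2_meas[OF hL2] in \<open>auto simp: G_def norm_mult elim: AE_mp\<close>)
  have bes: "2*pi*(\<Sum>n\<in>int ` {k..<M}. (cmod (fourier_coeff G n))\<^sup>2) \<le> NN h"
    using bessel[OF GL2, of "int ` {k..<M}"] NNG by simp
  have eqM: "(\<Sum>m\<in>{k..<M}. (cmod (fourier_coeff (\<lambda>t. cnj (\<theta> t) * f t) (int m)))\<^sup>2)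
        = (\<Sum>n\<in>int ` {k..<M}. (cmod (fourier_coeff G n))\<^sup>2)"
    by (subst sum.reindex) (auto simp: fcG)
  have e2: "0 < 2*pi*\<epsilon>" using eps by simp
  obtain I' where I': "finite I'" "NN (\<lambda>t. h t - (\<Sum>n\<in>I'. fourier_coeff h n * e n t)) < 2*pi*\<epsilon>"
    using approx[OF hL2 e2] by blast
  have "NN (\<lambda>t. h t - (\<Sum>n\<in>I'. fourier_coeff h n * e n t)) = NN h - 2*pi*(\<Sum>n\<in>I'. (cmod (fourier_coeff h n))\<^sup>2)"
    using ident[OF hL2 I'(1), of "fourier_coeff h"] by simp
  then have NNh: "NN h < 2*pi*((\<Sum>n\<in>I'. (cmod (fourier_coeff h n))\<^sup>2) + \<epsilon>)"
    using I'(2) by (simp add: ring_distribs)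
  define g where "g n = (if int k \<le> n then (cmod (fourier_coeff f n))\<^sup>2 else 0)" for n
  have gp: "\<And>n. 0 \<le> g n" "\<And>n. n < 0 \<Longrightarrow> g n = 0" by (auto simp: g_def)
  obtain B where B: "(\<Sum>n\<in>I'. g n) \<le> (\<Sum>m<B. g (int m))"
    using sum_tail_bound[of I' g, OF I'(1) gp(1) gp(2)] by blast
  have "(\<Sum>n\<in>I'. (cmod (fourier_coeff h n))\<^sup>2) = (\<Sum>n\<in>I'. g n)"
    by (rule sum.cong) (auto simp: fch g_def)
  moreover have "(\<Sum>m<B. g (int m)) = (\<Sum>m<B. if k \<le> m then (cmod (fourier_coeff f (int m)))\<^sup>2 else 0)"
    by (simp add: g_def)
  ultimately have R: "(\<Sum>n\<in>I'. (cmod (fourier_coeff h n))\<^sup>2) \<le> (\<Sum>m<B. if k \<le> m then (cmod (fourier_coeff f (int m)))\<^sup>2 else 0)"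
    using B by simp
  have "2*pi*(\<Sum>m\<in>{k..<M}. (cmod (fourier_coeff (\<lambda>t. cnj (\<theta> t) * f t) (int m)))\<^sup>2) \<le> NN h"
    using bes eqM by simp
  also have "\<dots> < 2*pi*((\<Sum>n\<in>I'. (cmod (fourier_coeff h n))\<^sup>2) + \<epsilon>)" by (rule NNh)
  also have "\<dots> \<le> 2*pi*((\<Sum>m<B. if k \<le> m then (cmod (fourier_coeff f (int m)))\<^sup>2 else 0) + \<epsilon>)"
    using R by (intro mult_left_mono) auto
  finally show ?thesis by (intro exI[of _ B]) simp
qed

lemma H2_mult:
  assumes th: "inner_fun \<theta>" and g: "g \<in> H2"
  shows "(\<lambda>t. g t * \<theta> t) \<in> H2"
proof -
  note thp = inner_props[OF th]
  note gp = H2_props[OF g]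
  have L: "(\<lambda>t. g t * \<theta> t) \<in> L2_circ" by (rule L2_mult_inner[OF th gp(1)])
  have "fourier_coeff (\<lambda>t. g t * \<theta> t) n = 0" if n: "n < 0" for n
  proof -
    have "(cmod (fourier_coeff (\<lambda>t. g t * \<theta> t) n))\<^sup>2 \<le> \<epsilon>" if eps: "0 < \<epsilon>" for \<epsilon>
    proof -
      have e2: "0 < 2*pi*\<epsilon>" using eps by simp
      obtain I where I: "finite I" "NN (\<lambda>t. g t - (\<Sum>j\<in>I. fourier_coeff g j * e j t)) < 2*pi*\<epsilon>"
        using approx[OF gp(1) e2] by blast
      define S where "S t = (\<Sum>j\<in>I. fourier_coeff g j * e j t)" for t
      have SL2: "S \<in> L2_circ" unfolding S_def[abs_def] by simp
      have D: "(\<lambda>t. (g t - S t) * \<theta> t) \<in> L2_circ" by (rule L2_mult_inner[OF th]) (use gp(1) SL2 in simp)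
      have "(\<lambda>t. g t * \<theta> t) = (\<lambda>t. (g t - S t) * \<theta> t + (\<Sum>j\<in>I. fourier_coeff g j * (e j t * \<theta> t)))"
        by (auto simp: fun_eq_iff S_def ring_distribs sum_distrib_right mult.assoc)
      then have "fourier_coeff (\<lambda>t. g t * \<theta> t) n = fourier_coeff (\<lambda>t. (g t - S t) * \<theta> t) n
          + (\<Sum>j\<in>I. fourier_coeff g j * fourier_coeff (\<lambda>t. e j t * \<theta> t) n)"
        using D I(1) L2_mult_inner[OF th L2_e]
        by (simp add: fc_add fc_sum)
      also have "(\<Sum>j\<in>I. fourier_coeff g j * fourier_coeff (\<lambda>t. e j t * \<theta> t) n) = 0"
      proof (rule sum.neutral, intro ballI)
        fix j assume "j \<in> I"
        show "fourier_coeff g j * fourier_coeff (\<lambda>t. e j t * \<theta> t) n = 0"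
        proof (cases "j < 0")
          case True then show ?thesis using gp(2) by simp
        next
          case False then show ?thesis using n thp(3) by (simp add: fc_e_mult)
        qed
      qed
      finally have eq: "fourier_coeff (\<lambda>t. g t * \<theta> t) n = fourier_coeff (\<lambda>t. (g t - S t) * \<theta> t) n" by simp
      have "NN (\<lambda>t. (g t - S t) * \<theta> t) = NN (\<lambda>t. g t - S t)"
        by (rule NN_cong_AE) (use thp(2) L2_meas[OF D] L2_meas[OF L2_diff[OF gp(1) SL2]] in \<open>auto simp: norm_mult elim: AE_mp\<close>)
      then have "(cmod (fourier_coeff (\<lambda>t. g t * \<theta> t) n))\<^sup>2 \<le> NN (\<lambda>t. g t - S t) / (2*pi)"
        using coef_bound[OF D, of n] eq by simp
      also have "\<dots> \<le> \<epsilon>" using I(2) by (simp add: S_def field_simps)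
      finally show ?thesis .
    qed
    then have "(cmod (fourier_coeff (\<lambda>t. g t * \<theta> t) n))\<^sup>2 \<le> 0"
      by (meson dense not_le)
    then show ?thesis by simp
  qed
  then show ?thesis using L by (simp add: H2_def)
qed

definition TL :: "(nat \<Rightarrow> complex) \<Rightarrow> nat \<Rightarrow> ennreal" where
  "TL a k = (\<Sum>n. ennreal (if k \<le> n then (cmod (a n))\<^sup>2 else 0))"

lemma toep_eq: "toeplitz_conj_coeffs \<theta> f n = fourier_coeff (\<lambda>t. cnj (\<theta> t) * f t) (int n)"
  unfolding toeplitz_conj_coeffs_def Pplus_coeffs_def by (rule refl)

lemma cis_meas[measurable]: "(\<lambda>t. cis (- (real_of_int n * t))) \<in> borel_measurable circ"
  by (rule cont_meas_circ) (intro continuous_intros)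

lemma pplus_eq: "Pplus_coeffs F n = fourier_coeff F (int n)"
  by (rule Pplus_coeffs_def)

lemma ennreal_partial_le:
  fixes f :: "nat \<Rightarrow> ennreal"
  shows "(\<Sum>n<B. f n) \<le> (\<Sum>n. f n)"
  by (rule sum_le_suminf[OF summableI]) auto

lemma tail_le1:
  assumes th: "inner_fun \<theta>" and f: "f \<in> H2"
  shows "TL (toeplitz_conj_coeffs \<theta> f) k \<le> TL (Pplus_coeffs f) k"
  unfolding TL_def
proof (rule suminf_le_const[OF summableI])
  fix M
  let ?T = "\<lambda>n. fourier_coeff (\<lambda>t. cnj (\<theta> t) * f t) (int n)"
  have eq: "(\<Sum>n<M. ennreal (if k \<le> n then (cmod (toeplitz_conj_coeffs \<theta> f n))\<^sup>2 else 0))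
      = ennreal (\<Sum>m\<in>{k..<M}. (cmod (?T m))\<^sup>2)"
  proof -
    have "(\<Sum>n<M. ennreal (if k \<le> n then (cmod (toeplitz_conj_coeffs \<theta> f n))\<^sup>2 else 0))
        = ennreal (\<Sum>n<M. (if k \<le> n then (cmod (?T n))\<^sup>2 else 0))"
      unfolding toep_eq by (rule sum_ennreal) auto
    also have "(\<Sum>n<M. (if k \<le> n then (cmod (?T n))\<^sup>2 else 0)) = (\<Sum>m\<in>{k..<M}. (cmod (?T m))\<^sup>2)"
    proof -
      have "(\<Sum>n<M. (if k \<le> n then (cmod (?T n))\<^sup>2 else 0)) = (\<Sum>n\<in>{..<M} \<inter> {n. k \<le> n}. (cmod (?T n))\<^sup>2)"
        by (simp add: sum.inter_restrict)
      also have "{..<M} \<inter> {n. k \<le> n} = {k..<M}" by auto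
      finally show ?thesis .
    qed
    finally show ?thesis .
  qed
  show "(\<Sum>n<M. ennreal (if k \<le> n then (cmod (toeplitz_conj_coeffs \<theta> f n))\<^sup>2 else 0))
      \<le> (\<Sum>n. ennreal (if k \<le> n then (cmod (Pplus_coeffs f n))\<^sup>2 else 0))"
    unfolding eq
  proof (rule ennreal_le_epsilon)
    fix \<epsilon> :: real assume eps: "0 < \<epsilon>"
    obtain B where B: "(\<Sum>m\<in>{k..<M}. (cmod (?T m))\<^sup>2)
            \<le> (\<Sum>m<B. if k \<le> m then (cmod (fourier_coeff f (int m)))\<^sup>2 else 0) + \<epsilon>"
      using tail_real[OF th f eps, of k M] by blast
    define R where "R = (\<Sum>m<B. if k \<le> m then (cmod (fourier_coeff f (int m)))\<^sup>2 else 0)"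
    have R0: "0 \<le> R" unfolding R_def by (rule sum_nonneg) auto
    have s1: "ennreal (\<Sum>m\<in>{k..<M}. (cmod (?T m))\<^sup>2) \<le> ennreal (R + \<epsilon>)"
      using B unfolding R_def by (rule ennreal_leI)
    have s2: "ennreal (R + \<epsilon>) = ennreal R + ennreal \<epsilon>"
      using eps R0 by (intro ennreal_plus) auto
    have s3: "ennreal R = (\<Sum>m<B. ennreal (if k \<le> m then (cmod (Pplus_coeffs f m))\<^sup>2 else 0))"
      unfolding R_def pplus_eq by (rule sum_ennreal[symmetric]) auto
    have s4: "(\<Sum>m<B. ennreal (if k \<le> m then (cmod (Pplus_coeffs f m))\<^sup>2 else 0)) \<le> (\<Sum>n. ennreal (if k \<le> n then (cmod (Pplus_coeffs f n))\<^sup>2 else 0))"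
      by (rule ennreal_partial_le)
    have "ennreal (\<Sum>m\<in>{k..<M}. (cmod (?T m))\<^sup>2) \<le> ennreal R + ennreal \<epsilon>"
      using s1 s2 by simp
    also have "\<dots> \<le> (\<Sum>n. ennreal (if k \<le> n then (cmod (Pplus_coeffs f n))\<^sup>2 else 0)) + ennreal \<epsilon>"
      by (rule add_right_mono) (use s3 s4 in simp)
    finally show "ennreal (\<Sum>m\<in>{k..<M}. (cmod (?T m))\<^sup>2)
        \<le> (\<Sum>n. ennreal (if k \<le> n then (cmod (Pplus_coeffs f n))\<^sup>2 else 0)) + ennreal \<epsilon>" .
  qed
qed

lemma tail_le2:
  assumes th: "inner_fun \<theta>" and g: "g \<in> H2"
  shows "TL (Pplus_coeffs g) k \<le> TL (Pplus_coeffs (\<lambda>t. g t * \<theta> t)) k"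
proof -
  note thp = inner_props[OF th]
  note gp = H2_props[OF g]
  have "fourier_coeff g n = fourier_coeff (\<lambda>t. cnj (\<theta> t) * (g t * \<theta> t)) n" for n
    unfolding fourier_coeff_def
  proof (intro arg_cong2[where f="(/)"] refl integral_cong_AE)
    show "(\<lambda>t. g t * cis (- (real_of_int n * t))) \<in> borel_measurable circ"
      using L2_meas[OF gp(1)] by measurable
    show "(\<lambda>t. cnj (\<theta> t) * (g t * \<theta> t) * cis (- (real_of_int n * t))) \<in> borel_measurable circ"
      using L2_meas[OF gp(1)] thp(1) by measurable
    show "AE t in circ. g t * cis (- (real_of_int n * t)) = cnj (\<theta> t) * (g t * \<theta> t) * cis (- (real_of_int n * t))"
      using thp(2)
    proof eventually_elim
      case (elim t)
      have "cnj (\<theta> t) * \<theta> t = 1"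
        using complex_norm_square[of "\<theta> t"] elim by (simp add: mult.commute)
      have "cnj (\<theta> t) * (g t * \<theta> t) = g t * (cnj (\<theta> t) * \<theta> t)" by (simp only: ac_simps)
      then show ?case using \<open>cnj (\<theta> t) * \<theta> t = 1\<close> by simp
    qed
  qed
  then have "TL (Pplus_coeffs g) k = TL (toeplitz_conj_coeffs \<theta> (\<lambda>t. g t * \<theta> t)) k"
    by (simp only: TL_def pplus_eq toep_eq)
  also have "\<dots> \<le> TL (Pplus_coeffs (\<lambda>t. g t * \<theta> t)) k"
    by (rule tail_le1[OF th H2_mult[OF th g]])
  finally show ?thesis .
qed

lemma weighted:
  fixes v x y :: "nat \<Rightarrow> real"
  assumes v: "\<forall>n. v n > 0" "mono v" and x: "\<And>n. 0 \<le> x n" and y: "\<And>n. 0 \<le> y n"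
    and T: "\<And>k. (\<Sum>n. ennreal (if k \<le> n then x n else 0)) \<le> (\<Sum>n. ennreal (if k \<le> n then y n else 0))"
  shows "(\<Sum>n. ennreal (v n * x n)) \<le> (\<Sum>n. ennreal (v n * y n))"
proof (rule suminf_le_const[OF summableI])
  fix M
  define w where "w k = v k - (if k = 0 then 0 else v (k - 1))" for k
  have w0: "0 \<le> w k" for k
  proof (cases k)
    case 0 then show ?thesis using v(1) by (simp add: w_def less_imp_le)
  next
    case (Suc j) then show ?thesis using monoD[OF v(2), of j "Suc j"] by (simp add: w_def)
  qed
  have vw: "v n = (\<Sum>k\<le>n. w k)" for n
    by (induction n) (auto simp: w_def)
  have vw2: "(\<Sum>k<M. if k \<le> n then w k else 0) \<le> v n" for n
  proof -
    have "(\<Sum>k<M. if k \<le> n then w k else 0) = (\<Sum>k\<in>{..<M} \<inter> {k. k \<le> n}. w k)"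
      by (simp add: sum.inter_restrict)
    also have "\<dots> \<le> (\<Sum>k\<le>n. w k)" by (rule sum_mono2) (auto simp: w0)
    finally show ?thesis by (simp add: vw)
  qed
  have "(\<Sum>n<M. ennreal (v n * x n)) = (\<Sum>n<M. \<Sum>k<M. ennreal (w k) * ennreal (if k \<le> n then x n else 0))"
  proof (rule sum.cong[OF refl])
    fix n assume n: "n \<in> {..<M}"
    have "(\<Sum>k<M. ennreal (w k) * ennreal (if k \<le> n then x n else 0))
        = ennreal (\<Sum>k<M. w k * (if k \<le> n then x n else 0))"
      using w0 x by (simp add: ennreal_mult'[symmetric])
    also have "(\<Sum>k<M. w k * (if k \<le> n then x n else 0)) = (\<Sum>k<M. if k \<le> n then w k * x n else 0)"
      by (rule sum.cong) auto
    also have "\<dots> = (\<Sum>k\<in>{..<M} \<inter> {k. k \<le> n}. w k * x n)"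
      by (simp add: sum.inter_restrict)
    also have "{..<M} \<inter> {k. k \<le> n} = {..n}" using n by auto
    also have "(\<Sum>k\<le>n. w k * x n) = v n * x n" by (simp add: vw sum_distrib_right)
    finally show "ennreal (v n * x n) = (\<Sum>k<M. ennreal (w k) * ennreal (if k \<le> n then x n else 0))" by simp
  qed
  also have "\<dots> = (\<Sum>k<M. ennreal (w k) * (\<Sum>n<M. ennreal (if k \<le> n then x n else 0)))"
    by (subst sum.swap) (simp add: sum_distrib_left)
  also have "\<dots> \<le> (\<Sum>k<M. ennreal (w k) * (\<Sum>n. ennreal (if k \<le> n then y n else 0)))"
  proof (rule sum_mono, rule mult_left_mono)
    fix k
    show "(\<Sum>n<M. ennreal (if k \<le> n then x n else 0)) \<le> (\<Sum>n. ennreal (if k \<le> n then y n else 0))"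
      by (rule order_trans[OF ennreal_partial_le T])
  qed simp
  also have "\<dots> = (\<Sum>n. \<Sum>k<M. ennreal (w k) * ennreal (if k \<le> n then y n else 0))"
    by (subst suminf_sum[OF summableI]) simp
  also have "\<dots> \<le> (\<Sum>n. ennreal (v n * y n))"
  proof (rule suminf_le[OF _ summableI summableI])
    fix n
    have "(\<Sum>k<M. ennreal (w k) * ennreal (if k \<le> n then y n else 0))
        = ennreal (\<Sum>k<M. (if k \<le> n then w k else 0) * y n)"
    proof -
      have "(\<Sum>k<M. ennreal (w k) * ennreal (if k \<le> n then y n else 0))
          = (\<Sum>k<M. ennreal ((if k \<le> n then w k else 0) * y n))"
        by (rule sum.cong) (use w0 y in \<open>auto simp: ennreal_mult'[symmetric]\<close>)
      also have "\<dots> = ennreal (\<Sum>k<M. (if k \<le> n then w k else 0) * y n)"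
        by (rule sum_ennreal) (use w0 y in auto)
      finally show ?thesis .
    qed
    also have "\<dots> = ennreal ((\<Sum>k<M. if k \<le> n then w k else 0) * y n)"
      by (simp add: sum_distrib_right)
    also have "\<dots> \<le> ennreal (v n * y n)"
      by (rule ennreal_leI, rule mult_right_mono[OF vw2 y])
    finally show "(\<Sum>k<M. ennreal (w k) * ennreal (if k \<le> n then y n else 0)) \<le> ennreal (v n * y n)" .
  qed
  finally show "(\<Sum>n<M. ennreal (v n * x n)) \<le> (\<Sum>n. ennreal (v n * y n))" .
qed

lemma ennsqrt_mono: "a \<le> b \<Longrightarrow> ennsqrt a \<le> ennsqrt b"
proof (cases "b = top")
  case True then show ?thesis by (simp add: ennsqrt_def)
next
  case False
  assume ab: "a \<le> b"
  then have "a \<noteq> top" using False top_unique by blast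
  moreover have "enn2real a \<le> enn2real b" using ab False by (simp add: enn2real_mono less_top)
  ultimately show ?thesis using False by (simp add: ennsqrt_def ennreal_leI)
qed

theorem corollary3p3:
  fixes v :: "nat \<Rightarrow> real" and \<theta> :: "real \<Rightarrow> complex"
  assumes "\<forall>n. v n > 0" and "mono v"
    and "inner_fun \<theta>"
  shows "(\<forall>f \<in> H2. vnorm v (toeplitz_conj_coeffs \<theta> f) \<le> vnorm v (Pplus_coeffs f)) \<and>
         (\<forall>g \<in> H2. vnorm v (Pplus_coeffs g) \<le> vnorm v (Pplus_coeffs (\<lambda>t. g t * \<theta> t)))"
proof (intro conjI ballI)
  fix f assume f: "f \<in> H2"
  show "vnorm v (toeplitz_conj_coeffs \<theta> f) \<le> vnorm v (Pplus_coeffs f)"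
    unfolding vnorm_def
    by (rule ennsqrt_mono, rule weighted[OF assms(1,2)])
      (use tail_le1[OF assms(3) f] in \<open>auto simp: TL_def\<close>)
next
  fix g assume g: "g \<in> H2"
  show "vnorm v (Pplus_coeffs g) \<le> vnorm v (Pplus_coeffs (\<lambda>t. g t * \<theta> t))"
    unfolding vnorm_def
    by (rule ennsqrt_mono, rule weighted[OF assms(1,2)])
      (use tail_le2[OF assms(3) g] in \<open>auto simp: TL_def\<close>)
qed

end
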